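(* Let $G$ be a finite group, $A$ an abelian group and $f:G\to A$ an arbitrary function. Let $f^{g_1},\dots,f^{g_n}$ (with $g_1,\dots,g_n\in G$) be the distinct elements of the set $\{f^g: g\in G\}$. Then the function $\overline f:G\to A$ defined by $\overline f(x)=\prod_{i=1}^n f^{g_i}(x)$ is a group homomorphism.
   Context: For a function $f:G\to A$ and $a\in G$, $f^a:G\to A$ is defined by $f^a(x)=f(a)^{-1}f(ax)$. *)

theory Defs
  imports "HOL-Algebra.Algebra"
begin

text \<open>The translate f^a of f : G -> A, f^a(x) = f(a)^{-1} f(ax), as a function
  on the carrier of G (extensional, so distinct translates are distinct as maps G -> A).\<close>
definition translate ::
  "('g, 'c) monoid_scheme \<Rightarrow> ('a, 'd) monoid_scheme \<Rightarrow> ('g \<Rightarrow> 'a) \<Rightarrow> 'g \<Rightarrow> ('g \<Rightarrow> 'a)" where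
  "translate G A f a = (\<lambda>x\<in>carrier G. inv\<^bsub>A\<^esub> (f a) \<otimes>\<^bsub>A\<^esub> f (a \<otimes>\<^bsub>G\<^esub> x))"

end

theory Submission
  imports Defs
begin

theorem mainTheorem5:
  fixes G :: "('g, 'c) monoid_scheme" and A :: "('a, 'd) monoid_scheme"
    and f :: "'g \<Rightarrow> 'a"
  assumes "group G" and "finite (carrier G)" and "comm_group A"
    and "f \<in> carrier G \<rightarrow> carrier A"
  shows "(\<lambda>x. finprod A (\<lambda>h. h x) (translate G A f ` carrier G)) \<in> hom G A"
proof -
  interpret G: group G by fact
  interpret A: comm_group A by fact
  define T where "T = translate G A f ` carrier G"
  have fT: "finite T" unfolding T_def using assms(2) by simp
  have val: "h y \<in> carrier A" if "h \<in> T" "y \<in> carrier G" for h y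
    using that assms(4) unfolding T_def translate_def by (auto intro!: A.m_closed A.inv_closed simp: Pi_iff)
  have clos: "(\<lambda>h. h y) \<in> T \<rightarrow> carrier A" if "y \<in> carrier G" for y
    using val that by auto
  have mult: "finprod A (\<lambda>h. h (b \<otimes>\<^bsub>G\<^esub> x)) T
      = finprod A (\<lambda>h. h b) T \<otimes>\<^bsub>A\<^esub> finprod A (\<lambda>h. h x) T"
    if b: "b \<in> carrier G" and x: "x \<in> carrier G" for b x
  proof -
    define \<sigma> where "\<sigma> h = (\<lambda>y\<in>carrier G. inv\<^bsub>A\<^esub> (h b) \<otimes>\<^bsub>A\<^esub> h (b \<otimes>\<^bsub>G\<^esub> y))" for h
    have st: "\<sigma> (translate G A f a) = translate G A f (a \<otimes>\<^bsub>G\<^esub> b)" if a: "a \<in> carrier G" for a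
    proof
      fix y
      show "\<sigma> (translate G A f a) y = translate G A f (a \<otimes>\<^bsub>G\<^esub> b) y"
      proof (cases "y \<in> carrier G")
        case True
        have fa: "f a \<in> carrier A" and fab: "f (a \<otimes>\<^bsub>G\<^esub> b) \<in> carrier A"
          and faby: "f (a \<otimes>\<^bsub>G\<^esub> b \<otimes>\<^bsub>G\<^esub> y) \<in> carrier A"
          using assms(4) a b True by auto
        have "\<sigma> (translate G A f a) y = inv\<^bsub>A\<^esub> (inv\<^bsub>A\<^esub> (f a) \<otimes>\<^bsub>A\<^esub> f (a \<otimes>\<^bsub>G\<^esub> b)) \<otimes>\<^bsub>A\<^esub>
            (inv\<^bsub>A\<^esub> (f a) \<otimes>\<^bsub>A\<^esub> f (a \<otimes>\<^bsub>G\<^esub> b \<otimes>\<^bsub>G\<^esub> y))"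
          using True a b by (simp add: \<sigma>_def translate_def G.m_assoc)
        also have "\<dots> = inv\<^bsub>A\<^esub> (f (a \<otimes>\<^bsub>G\<^esub> b)) \<otimes>\<^bsub>A\<^esub> f (a \<otimes>\<^bsub>G\<^esub> b \<otimes>\<^bsub>G\<^esub> y)"
          using fa fab faby
          by (simp add: A.inv_mult A.m_assoc A.inv_inv A.m_lcomm[of "f a"] A.m_comm[of "f a"] A.r_inv)
            (metis A.m_comm A.m_assoc A.inv_closed A.l_inv A.r_one)
        finally show ?thesis using True a b by (simp add: translate_def)
      next
        case False
        then show ?thesis by (simp add: \<sigma>_def translate_def)
      qed
    qed
    have img: "\<sigma> ` T = T"
    proof -
      have "\<sigma> ` T = translate G A f ` ((\<lambda>a. a \<otimes>\<^bsub>G\<^esub> b) ` carrier G)"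
        unfolding T_def image_image using st by (auto simp: image_iff)
      also have "(\<lambda>a. a \<otimes>\<^bsub>G\<^esub> b) ` carrier G = carrier G"
        proof
        show "(\<lambda>a. a \<otimes>\<^bsub>G\<^esub> b) ` carrier G \<subseteq> carrier G" using b by auto
        show "carrier G \<subseteq> (\<lambda>a. a \<otimes>\<^bsub>G\<^esub> b) ` carrier G"
        proof
          fix c assume c: "c \<in> carrier G"
          have "c = (c \<otimes>\<^bsub>G\<^esub> inv\<^bsub>G\<^esub> b) \<otimes>\<^bsub>G\<^esub> b"
            using b c by (simp add: G.m_assoc)
          then show "c \<in> (\<lambda>a. a \<otimes>\<^bsub>G\<^esub> b) ` carrier G" using b c by blast
        qed
      qed
      finally show ?thesis unfolding T_def .
    qed
    have inj: "inj_on \<sigma> T"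
      by (rule eq_card_imp_inj_on[OF fT]) (simp add: img)
    have "finprod A (\<lambda>h. h (b \<otimes>\<^bsub>G\<^esub> x)) T = finprod A (\<lambda>h. h b \<otimes>\<^bsub>A\<^esub> \<sigma> h x) T"
    proof (rule A.finprod_cong')
      fix h assume h: "h \<in> T"
      have "h b \<otimes>\<^bsub>A\<^esub> \<sigma> h x = h b \<otimes>\<^bsub>A\<^esub> (inv\<^bsub>A\<^esub> (h b) \<otimes>\<^bsub>A\<^esub> h (b \<otimes>\<^bsub>G\<^esub> x))"
        using x by (simp add: \<sigma>_def)
      also have "\<dots> = h (b \<otimes>\<^bsub>G\<^esub> x)"
        using val[OF h b] val[OF h G.m_closed[OF b x]]
        by (simp add: A.m_assoc[symmetric] A.r_inv)
      finally show "h (b \<otimes>\<^bsub>G\<^esub> x) = h b \<otimes>\<^bsub>A\<^esub> \<sigma> h x" by simp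
    next
      show "(\<lambda>h. h b \<otimes>\<^bsub>A\<^esub> \<sigma> h x) \<in> T \<rightarrow> carrier A"
        using val b x by (auto simp: \<sigma>_def)
    qed simp
    also have "\<dots> = finprod A (\<lambda>h. h b) T \<otimes>\<^bsub>A\<^esub> finprod A (\<lambda>h. \<sigma> h x) T"
      by (rule A.finprod_multf) (use val b x in \<open>auto simp: \<sigma>_def\<close>)
    also have "finprod A (\<lambda>h. \<sigma> h x) T = finprod A (\<lambda>h. h x) (\<sigma> ` T)"
      using A.finprod_reindex[of "\<lambda>h. h x" \<sigma> T] inj img clos[OF x] by (simp add: comp_def)
    finally show ?thesis using img by simp
  qed
  show ?thesis unfolding T_def[symmetric]
    by (rule homI) (use clos mult in \<open>auto intro: A.finprod_closed\<close>)
qed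

end
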